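(* Let $\lambda\in(0,1)$ with $\lambda\neq1-\frac1{2n}$ for all $n\in\mathbb{N}$, and let $\tau_0,\tau_{1/4},X_L,W,\nu_\lambda,\mathcal{W}_0,W^\omega,\tau_\omega$ be as in the context. Then the partial sums $S_n(x)=\sum_{\omega\in\mathcal{W}_0,\ |\omega|\le n}W^\omega(x)\,|\hat\nu_\lambda(\tau_\omega x)|^2$ converge to $1$ uniformly on $X_L$.
   Context: $\tau_0(x)=\lambda x$, $\tau_{1/4}(x)=\lambda(x+\frac14)$; $X_L$ is the unique nonempty compact set with $X_L=\tau_0(X_L)\cup\tau_{1/4}(X_L)$; $W(x)=\cos^2(2\pi x/\lambda)$. $\nu_\lambda$ is the unique Borel probability measure on $\mathbb{R}$ with $\nu_\lambda=\frac12(\nu_\lambda\circ\tau_+^{-1}+\nu_\lambda\circ\tau_-^{-1})$, $\tau_\pm(x)=\lambda x\pm1$, and $\hat\nu_\lambda(t)=\int e^{2\pi ixt}d\nu_\lambda(x)$. $\mathcal{W}_0=\{\emptyset\}\cup\{\omega_1\dots\omega_n: n\ge1,\ \omega_i\in\{0,\frac14\},\ \omega_n=\frac14\}$, $|\omega|$ is word length. For $\omega=\omega_1\dots\omega_n$: $\tau_\omega x=\tau_{\omega_n}\cdots\tau_{\omega_1}x$, $W^\omega(x)=\prod_{k=1}^nW(\tau_{\omega_k}\cdots\tau_{\omega_1}x)$; $\tau_\emptyset x=x$, $W^\emptyset=1$. *)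

theory Defs
  imports "HOL-Probability.Probability"
begin

definition tau :: "real \<Rightarrow> real \<Rightarrow> real \<Rightarrow> real" where
  "tau lam d x = lam * (x + d)"

definition XL :: "real \<Rightarrow> real set" where
  "XL lam = (THE X. X \<noteq> {} \<and> compact X \<and> X = tau lam 0 ` X \<union> tau lam (1/4) ` X)"

definition Wfun :: "real \<Rightarrow> real \<Rightarrow> real" where
  "Wfun lam x = (cos (2 * pi * x / lam))\<^sup>2"

definition nu :: "real \<Rightarrow> real measure" where
  "nu lam = (THE M. prob_space M \<and> sets M = sets borel \<and>
     (\<forall>A \<in> sets borel. emeasure M A =
        (emeasure M ((\<lambda>x. lam * x + 1) -` A) + emeasure M ((\<lambda>x. lam * x - 1) -` A)) / 2))"

definition nu_hat :: "real \<Rightarrow> real \<Rightarrow> complex" where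
  "nu_hat lam t = integral\<^sup>L (nu lam) (\<lambda>x. cis (2 * pi * x * t))"

definition W0 :: "real list set" where
  "W0 = {[]} \<union> {w. w \<noteq> [] \<and> set w \<subseteq> {0, 1/4} \<and> last w = 1/4}"

definition tau_word :: "real \<Rightarrow> real list \<Rightarrow> real \<Rightarrow> real" where
  "tau_word lam w x = foldl (\<lambda>y d. tau lam d y) x w"

definition W_word :: "real \<Rightarrow> real list \<Rightarrow> real \<Rightarrow> real" where
  "W_word lam w x = (\<Prod>k<length w. Wfun lam (tau_word lam (take (Suc k) w) x))"

definition S_partial :: "real \<Rightarrow> nat \<Rightarrow> real \<Rightarrow> real" where
  "S_partial lam n x = (\<Sum>w \<in> {w \<in> W0. length w \<le> n}.
      W_word lam w x * (cmod (nu_hat lam (tau_word lam w x)))\<^sup>2)"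

end

theory Submission
  imports Defs
begin

lemma mix_nn:
  fixes M N1 N2 :: "real measure"
  assumes sM: "sets M = sets borel" and s1: "sets N1 = sets borel" and s2: "sets N2 = sets borel"
    and eq: "\<And>A. A \<in> sets borel \<Longrightarrow> 2 * emeasure M A = emeasure N1 A + emeasure N2 A"
    and u: "u \<in> borel_measurable borel"
  shows "2 * (\<integral>\<^sup>+x. u x \<partial>M) = (\<integral>\<^sup>+x. u x \<partial>N1) + (\<integral>\<^sup>+x. u x \<partial>N2)"
  using u
proof (induct rule: borel_measurable_induct)
  case (cong f g)
  then have "f = g" by auto
  then show ?case using cong by simp
next
  case (set A)
  have a: "A \<in> sets M" "A \<in> sets N1" "A \<in> sets N2" using set sM s1 s2 by auto
  have "(\<integral>\<^sup>+x. indicator A x \<partial>M) = emeasure M A" by (rule nn_integral_indicator[OF a(1)])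
  moreover have "(\<integral>\<^sup>+x. indicator A x \<partial>N1) = emeasure N1 A" by (rule nn_integral_indicator[OF a(2)])
  moreover have "(\<integral>\<^sup>+x. indicator A x \<partial>N2) = emeasure N2 A" by (rule nn_integral_indicator[OF a(3)])
  ultimately show ?case using eq[OF set] by (simp only:)
next
  case (mult u c)
  have m: "u \<in> borel_measurable M" "u \<in> borel_measurable N1" "u \<in> borel_measurable N2"
    using mult sM s1 s2 by (auto simp: measurable_cong_sets[OF sM refl] measurable_cong_sets[OF s1 refl] measurable_cong_sets[OF s2 refl])
  have "2 * (\<integral>\<^sup>+x. c * u x \<partial>M) = c * (2 * (\<integral>\<^sup>+x. u x \<partial>M))"
    using m by (simp add: nn_integral_cmult mult.left_commute)
  also have "\<dots> = c * (\<integral>\<^sup>+x. u x \<partial>N1) + c * (\<integral>\<^sup>+x. u x \<partial>N2)"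
    using mult by (simp add: distrib_left)
  also have "\<dots> = (\<integral>\<^sup>+x. c * u x \<partial>N1) + (\<integral>\<^sup>+x. c * u x \<partial>N2)"
    using m by (simp add: nn_integral_cmult)
  finally show ?case .
next
  case (add u v)
  have m: "u \<in> borel_measurable M" "u \<in> borel_measurable N1" "u \<in> borel_measurable N2"
     "v \<in> borel_measurable M" "v \<in> borel_measurable N1" "v \<in> borel_measurable N2"
    using add sM s1 s2 by (auto simp: measurable_cong_sets[OF sM refl] measurable_cong_sets[OF s1 refl] measurable_cong_sets[OF s2 refl])
  show ?case using add m by (simp add: nn_integral_add distrib_left algebra_simps)
next
  case (seq U)
  have m: "\<And>i. U i \<in> borel_measurable M" "\<And>i. U i \<in> borel_measurable N1" "\<And>i. U i \<in> borel_measurable N2"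
    using seq sM s1 s2 by (auto simp: measurable_cong_sets[OF sM refl] measurable_cong_sets[OF s1 refl] measurable_cong_sets[OF s2 refl])
  have mc: "\<And>N. (\<And>i. U i \<in> borel_measurable N) \<Longrightarrow> (\<integral>\<^sup>+x. (SUP i. U i) x \<partial>N) = (SUP i. (\<integral>\<^sup>+x. U i x \<partial>N))"
    unfolding SUP_apply by (rule nn_integral_monotone_convergence_SUP) (use seq in auto)
  have "2 * (\<integral>\<^sup>+x. (SUP i. U i) x \<partial>M) = 2 * (SUP i. (\<integral>\<^sup>+x. U i x \<partial>M))"
    using mc[OF m(1)] by simp
  also have "\<dots> = (SUP i. 2 * (\<integral>\<^sup>+x. U i x \<partial>M))"
    by (simp add: SUP_mult_left_ennreal)
  also have "\<dots> = (SUP i. (\<integral>\<^sup>+x. U i x \<partial>N1) + (\<integral>\<^sup>+x. U i x \<partial>N2))"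
    using seq by simp
  also have "\<dots> = (SUP i. (\<integral>\<^sup>+x. U i x \<partial>N1)) + (SUP i. (\<integral>\<^sup>+x. U i x \<partial>N2))"
  proof (rule ennreal_SUP_add)
    show "incseq (\<lambda>i. \<integral>\<^sup>+ x. U i x \<partial>N1)" using seq m
      by (auto simp: incseq_def le_fun_def intro!: nn_integral_mono)
    show "incseq (\<lambda>i. \<integral>\<^sup>+ x. U i x \<partial>N2)" using seq m
      by (auto simp: incseq_def le_fun_def intro!: nn_integral_mono)
  qed
  also have "\<dots> = (\<integral>\<^sup>+x. (SUP i. U i) x \<partial>N1) + (\<integral>\<^sup>+x. (SUP i. U i) x \<partial>N2)"
    using mc[OF m(2)] mc[OF m(3)] by simp
  finally show ?case .
qed


definition Pm :: "real \<Rightarrow> real measure \<Rightarrow> bool" where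
  "Pm lam M = (prob_space M \<and> sets M = sets borel \<and>
     (\<forall>A \<in> sets borel. emeasure M A =
        (emeasure M ((\<lambda>x. lam * x + 1) -` A) + emeasure M ((\<lambda>x. lam * x - 1) -` A)) / 2))"

lemma nu_Pm_def: "nu lam = (THE M. Pm lam M)"
  unfolding nu_def Pm_def by simp

lemma ennreal_half_eq: assumes "(x::ennreal) = (a + b) / 2" shows "2 * x = a + b"
proof -
  have "2 * x = 2 * (a + b) / 2" using assms by (simp only: ennreal_times_divide)
  also have "\<dots> = (a + b) * 2 / 2" by (simp only: mult.commute)
  also have "\<dots> = a + b" by (rule ennreal_mult_divide_eq) simp_all
  finally show ?thesis .
qed

lemma Pm_integral:
  fixes v :: "real \<Rightarrow> real"
  assumes P: "Pm lam M" and v: "v \<in> borel_measurable borel" and vb: "\<And>x. \<bar>v x\<bar> \<le> 1"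
  shows "2 * (\<integral>x. v x \<partial>M) = (\<integral>x. v (lam * x + 1) \<partial>M) + (\<integral>x. v (lam * x - 1) \<partial>M)"
proof -
  interpret prob_space M using P unfolding Pm_def by auto
  have sM: "sets M = sets borel" using P unfolding Pm_def by auto
  have spM: "space M = UNIV" using sets_eq_imp_space_eq[OF sM] by simp
  have mM: "measurable M = measurable borel" by (rule ext, rule measurable_cong_sets[OF sM refl])
  define f1 where "f1 = (\<lambda>x::real. lam * x + 1)"
  define f2 where "f2 = (\<lambda>x::real. lam * x - 1)"
  have f1m: "f1 \<in> borel_measurable M" unfolding mM f1_def by measurable
  have f2m: "f2 \<in> borel_measurable M" unfolding mM f2_def by measurable
  have eq: "2 * emeasure M A = emeasure (distr M borel f1) A + emeasure (distr M borel f2) A"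
    if "A \<in> sets borel" for A
  proof -
    have "emeasure M A = (emeasure M (f1 -` A) + emeasure M (f2 -` A)) / 2"
      using P that unfolding Pm_def f1_def f2_def by auto
    then have "2 * emeasure M A = emeasure M (f1 -` A) + emeasure M (f2 -` A)"
      by (rule ennreal_half_eq)
    then show ?thesis using that f1m f2m by (simp add: emeasure_distr spM)
  qed
  define u where "u = (\<lambda>x. ennreal (v x + 1))"
  have um: "u \<in> borel_measurable borel" unfolding u_def using v by measurable
  have key: "2 * (\<integral>\<^sup>+x. u x \<partial>M) = (\<integral>\<^sup>+x. u x \<partial>distr M borel f1) + (\<integral>\<^sup>+x. u x \<partial>distr M borel f2)"
    by (rule mix_nn[OF sM _ _ eq um]) auto
  have vM: "v \<in> borel_measurable M" using v unfolding mM .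
  have b2: "\<bar>v y + 1\<bar> \<le> 2" for y using vb[of y] by linarith
  have nn0: "0 \<le> v y + 1" for y using vb[of y] by linarith
  have int: "integrable M (\<lambda>x. v (g x) + 1)" if "g \<in> borel_measurable M" for g
    by (rule integrable_const_bound[where B=2]) (use b2 that vM in \<open>auto intro!: AE_I2 borel_measurable_add measurable_compose[OF that v]\<close>)
  have intv: "integrable M (\<lambda>x. v (g x))" if "g \<in> borel_measurable M" for g
    by (rule integrable_const_bound[where B=1]) (use vb that vM in \<open>auto intro!: measurable_compose[OF that v]\<close>)
  have nn: "(\<integral>\<^sup>+x. u (g x) \<partial>M) = ennreal (\<integral>x. v (g x) + 1 \<partial>M)" if "g \<in> borel_measurable M" for g
    unfolding u_def using nn0 by (intro nn_integral_eq_integral int that) (auto intro!: AE_I2)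
  have d1: "(\<integral>\<^sup>+x. u x \<partial>distr M borel f1) = (\<integral>\<^sup>+x. u (f1 x) \<partial>M)"
    by (rule nn_integral_distr[OF f1m]) (use um in simp)
  have d2: "(\<integral>\<^sup>+x. u x \<partial>distr M borel f2) = (\<integral>\<^sup>+x. u (f2 x) \<partial>M)"
    by (rule nn_integral_distr[OF f2m]) (use um in simp)
  have idm: "(\<lambda>x. x) \<in> borel_measurable M" unfolding mM by simp
  define a where "a = (\<integral>x. v x + 1 \<partial>M)"
  define b where "b = (\<integral>x. v (f1 x) + 1 \<partial>M)"
  define c where "c = (\<integral>x. v (f2 x) + 1 \<partial>M)"
  have "2 * ennreal a = ennreal b + ennreal c"
    using key nn[OF idm] nn[OF f1m] nn[OF f2m] d1 d2 unfolding a_def b_def c_def by simp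
  moreover have abc: "a \<ge> 0" "b \<ge> 0" "c \<ge> 0"
    unfolding a_def b_def c_def using nn0 by (auto intro!: integral_nonneg_AE AE_I2)
  ultimately have "ennreal (2 * a) = ennreal (b + c)"
    by (simp add: ennreal_mult ennreal_plus)
  then have "2 * a = b + c" using abc by (subst (asm) ennreal_inj) auto
  then have E: "2 * (\<integral>x. v x + 1 \<partial>M) = (\<integral>x. v (f1 x) + 1 \<partial>M) + (\<integral>x. v (f2 x) + 1 \<partial>M)"
    unfolding a_def b_def c_def .
  have G: "(\<integral>x. v (g x) + 1 \<partial>M) = (\<integral>x. v (g x) \<partial>M) + 1" if "g \<in> borel_measurable M" for g
    using intv[OF that] by (simp add: integral_add prob_space)
  have "2 * ((\<integral>x. v x \<partial>M) + 1) = ((\<integral>x. v (f1 x) \<partial>M) + 1) + ((\<integral>x. v (f2 x) \<partial>M) + 1)"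
    using E G[OF idm] G[OF f1m] G[OF f2m] by simp
  then show ?thesis unfolding f1_def f2_def by simp
qed


lemma Re_iexp: "Re (iexp y) = cos y" and Im_iexp: "Im (iexp y) = sin y"
  by (simp_all add: Re_exp Im_exp)

lemma Pm_rd: "Pm lam M \<Longrightarrow> real_distribution M"
  unfolding Pm_def real_distribution_def real_distribution_axioms_def by auto

lemma Pm_char:
  assumes P: "Pm lam M"
  shows "char M t = complex_of_real (cos t) * char M (lam * t)"
proof -
  interpret real_distribution M using Pm_rd[OF P] .
  have ic: "integrable M (\<lambda>x. cos (g x))" if "g \<in> borel_measurable borel" for g :: "real \<Rightarrow> real"
    by (rule integrable_const_bound[where B=1]) (use that in auto)
  have isn: "integrable M (\<lambda>x. sin (g x))" if "g \<in> borel_measurable borel" for g :: "real \<Rightarrow> real"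
    by (rule integrable_const_bound[where B=1]) (use that in auto)
  have c: "2 * (\<integral>x. cos (t*x) \<partial>M) = (\<integral>x. cos (t*(lam*x+1)) \<partial>M) + (\<integral>x. cos (t*(lam*x-1)) \<partial>M)"
    by (rule Pm_integral[OF P, of "\<lambda>x. cos (t*x)"]) auto
  have s: "2 * (\<integral>x. sin (t*x) \<partial>M) = (\<integral>x. sin (t*(lam*x+1)) \<partial>M) + (\<integral>x. sin (t*(lam*x-1)) \<partial>M)"
    by (rule Pm_integral[OF P, of "\<lambda>x. sin (t*x)"]) auto
  have cid: "cos (t*(lam*x+1)) + cos (t*(lam*x-1)) = 2 * cos t * cos (lam*t*x)" for x
    by (simp add: distrib_left right_diff_distrib cos_add cos_diff algebra_simps)
  have sid: "sin (t*(lam*x+1)) + sin (t*(lam*x-1)) = 2 * cos t * sin (lam*t*x)" for x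
    by (simp add: distrib_left right_diff_distrib sin_add sin_diff algebra_simps)
  have c2: "(\<integral>x. cos (t*x) \<partial>M) = cos t * (\<integral>x. cos (lam*t*x) \<partial>M)"
  proof -
    have "(\<integral>x. cos (t*(lam*x+1)) \<partial>M) + (\<integral>x. cos (t*(lam*x-1)) \<partial>M)
        = (\<integral>x. cos (t*(lam*x+1)) + cos (t*(lam*x-1)) \<partial>M)"
      by (subst Bochner_Integration.integral_add) (auto intro!: ic)
    also have "\<dots> = (\<integral>x. 2 * cos t * cos (lam*t*x) \<partial>M)" by (simp only: cid)
    also have "\<dots> = 2 * cos t * (\<integral>x. cos (lam*t*x) \<partial>M)" by simp
    finally show ?thesis using c by simp
  qed
  have s2: "(\<integral>x. sin (t*x) \<partial>M) = cos t * (\<integral>x. sin (lam*t*x) \<partial>M)"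
  proof -
    have "(\<integral>x. sin (t*(lam*x+1)) \<partial>M) + (\<integral>x. sin (t*(lam*x-1)) \<partial>M)
        = (\<integral>x. sin (t*(lam*x+1)) + sin (t*(lam*x-1)) \<partial>M)"
      by (subst Bochner_Integration.integral_add) (auto intro!: isn)
    also have "\<dots> = (\<integral>x. 2 * cos t * sin (lam*t*x) \<partial>M)" by (simp only: sid)
    also have "\<dots> = 2 * cos t * (\<integral>x. sin (lam*t*x) \<partial>M)" by simp
    finally show ?thesis using s by simp
  qed
  have iint: "integrable M (\<lambda>x. iexp (s * x))" for s
    by (intro integrable_iexp) auto
  have Rc: "Re (char M s) = (\<integral>x. cos (s*x) \<partial>M)" for s
    unfolding char_def using integral_Re[OF iint[of s]] by (simp add: Re_exp Im_exp)
  have Ic: "Im (char M s) = (\<integral>x. sin (s*x) \<partial>M)" for s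
    unfolding char_def using integral_Im[OF iint[of s]] by (simp add: Re_exp Im_exp)
  show ?thesis
    by (rule complex_eqI) (simp_all add: Rc Ic c2 s2 mult.assoc)
qed

lemma Pm_char_iter:
  assumes P: "Pm lam M"
  shows "char M t = (\<Prod>k<n. complex_of_real (cos (lam^k * t))) * char M (lam^n * t)"
proof (induction n)
  case 0 then show ?case by simp
next
  case (Suc n)
  have "char M (lam^n * t) = complex_of_real (cos (lam^n * t)) * char M (lam^Suc n * t)"
    using Pm_char[OF P, of "lam^n * t"] by (simp add: mult.assoc mult.commute mult.left_commute)
  then show ?case using Suc by (simp add: mult.assoc)
qed

lemma Pm_unique:
  assumes "0 < lam" "lam < 1" and P1: "Pm lam M1" and P2: "Pm lam M2"
  shows "M1 = M2"
proof (rule Levy_uniqueness[OF Pm_rd[OF P1] Pm_rd[OF P2]])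
  interpret A: real_distribution M1 using Pm_rd[OF P1] .
  interpret B: real_distribution M2 using Pm_rd[OF P2] .
  show "char M1 = char M2"
  proof
    fix t
    define d where "d n = char M1 (lam^n * t) - char M2 (lam^n * t)" for n
    have lt: "(\<lambda>n. lam^n * t) \<longlonglongrightarrow> 0"
      using LIMSEQ_power_zero[of lam] assms(1,2) by (auto intro: tendsto_mult_left_zero)
    have "d \<longlonglongrightarrow> char M1 0 - char M2 0"
      unfolding d_def
      by (intro tendsto_diff isCont_tendsto_compose[OF A.isCont_char lt] isCont_tendsto_compose[OF B.isCont_char lt])
    then have d0: "(\<lambda>n. norm (d n)) \<longlonglongrightarrow> 0"
      using A.char_zero B.char_zero by (simp add: tendsto_norm_zero)
    have le: "norm (char M1 t - char M2 t) \<le> norm (d n)" for n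
    proof -
      have "char M1 t - char M2 t = (\<Prod>k<n. complex_of_real (cos (lam^k * t))) * d n"
        unfolding d_def using Pm_char_iter[OF P1, of t n] Pm_char_iter[OF P2, of t n]
        by (simp add: right_diff_distrib)
      moreover have "norm (\<Prod>k<n. complex_of_real (cos (lam^k * t))) \<le> 1"
        by (simp add: prod_norm[symmetric] abs_cos_le_one prod_le_1 del: of_real_prod)
      ultimately show ?thesis
        by (metis mult_left_le_one_le norm_ge_zero norm_mult)
    qed
    have "norm (char M1 t - char M2 t) \<le> 0"
      by (rule LIMSEQ_le_const[OF d0]) (use le in auto)
    then show "char M1 t = char M2 t" by simp
  qed
qed


definition coin :: "bool measure" where "coin = measure_pmf (pmf_of_set UNIV)"

definition sgnb :: "bool \<Rightarrow> real" where "sgnb b = (if b then 1 else -1)"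

definition Xs :: "real \<Rightarrow> bool stream \<Rightarrow> real" where
  "Xs lam s = (\<Sum>k. lam^k * sgnb (s !! k))"

lemma Xs_summable:
  assumes "0 < lam" "lam < 1"
  shows "summable (\<lambda>k. lam^k * sgnb (s !! k))"
proof (rule summable_comparison_test')
  show "summable (\<lambda>k. lam^k)" using assms by (simp add: summable_geometric)
  show "norm (lam^k * sgnb (s !! k)) \<le> lam^k" for k
    using assms by (simp add: sgnb_def abs_mult)
qed

lemma Xs_Cons:
  assumes "0 < lam" "lam < 1"
  shows "Xs lam (b ## s) = sgnb b + lam * Xs lam s"
proof -
  have sm: "summable (\<lambda>k. lam^k * sgnb ((b ## s) !! k))" by (rule Xs_summable[OF assms])
  have "(\<Sum>k. lam^Suc k * sgnb ((b ## s) !! Suc k)) = Xs lam (b ## s) - sgnb b"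
    using suminf_split_head[OF sm] unfolding Xs_def by simp
  moreover have "(\<Sum>k. lam^Suc k * sgnb ((b ## s) !! Suc k)) = lam * Xs lam s"
    unfolding Xs_def using Xs_summable[OF assms, of s]
    by (simp add: suminf_mult[symmetric] mult.assoc)
  ultimately show ?thesis by simp
qed

lemma Xs_measurable: "Xs lam \<in> borel_measurable (stream_space coin)"
  unfolding Xs_def sgnb_def coin_def by measurable

lemma prob_space_coin: "prob_space coin"
  unfolding coin_def by (rule prob_space_measure_pmf)

lemma space_coin: "space coin = UNIV" unfolding coin_def by simp

lemma Pm_exists:
  assumes "0 < lam" "lam < 1"
  shows "Pm lam (distr (stream_space coin) borel (Xs lam))"
proof -
  interpret C: prob_space coin by (rule prob_space_coin)
  interpret S: prob_space "stream_space coin" by (rule C.prob_space_stream_space)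
  let ?N = "distr (stream_space coin) borel (Xs lam)"
  have "prob_space ?N" by (rule S.prob_space_distr[OF Xs_measurable])
  moreover have "sets ?N = sets borel" by simp
  moreover have "emeasure ?N A = (emeasure ?N ((\<lambda>x. lam * x + 1) -` A) + emeasure ?N ((\<lambda>x. lam * x - 1) -` A)) / 2"
    if A: "A \<in> sets borel" for A
  proof -
    have aff: "(\<lambda>y. lam * y + sgnb t) -` A \<in> sets borel" for t
      by (rule measurable_sets_borel[OF _ A]) simp
    have "emeasure ?N A = emeasure (stream_space coin) (Xs lam -` A \<inter> space (stream_space coin))"
      by (rule emeasure_distr[OF Xs_measurable A])
    also have "\<dots> = (\<integral>\<^sup>+t. emeasure (stream_space coin)
        {x\<in>space (stream_space coin). t ## x \<in> Xs lam -` A \<inter> space (stream_space coin)} \<partial>coin)"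
      by (rule C.emeasure_stream_space) (rule measurable_sets[OF Xs_measurable A])
    also have "\<dots> = (\<integral>\<^sup>+t. emeasure ?N ((\<lambda>y. lam * y + sgnb t) -` A) \<partial>coin)"
    proof (rule nn_integral_cong)
      fix t
      have "{x\<in>space (stream_space coin). t ## x \<in> Xs lam -` A \<inter> space (stream_space coin)}
          = Xs lam -` ((\<lambda>y. lam * y + sgnb t) -` A) \<inter> space (stream_space coin)"
        using Xs_Cons[OF assms] by (auto simp: stream_space_Stream space_coin add.commute)
      then show "emeasure (stream_space coin)
        {x\<in>space (stream_space coin). t ## x \<in> Xs lam -` A \<inter> space (stream_space coin)}
        = emeasure ?N ((\<lambda>y. lam * y + sgnb t) -` A)"
        by (simp add: emeasure_distr[OF Xs_measurable aff])
    qed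
    also have "\<dots> = (emeasure ?N ((\<lambda>x. lam * x + 1) -` A) + emeasure ?N ((\<lambda>x. lam * x - 1) -` A)) / 2"
      unfolding coin_def
      by (subst nn_integral_pmf_of_set) (auto simp: UNIV_bool sgnb_def add.commute)
    finally show ?thesis .
  qed
  ultimately show ?thesis unfolding Pm_def by blast
qed

lemma nu_Pm:
  assumes "0 < lam" "lam < 1"
  shows "Pm lam (nu lam)"
proof -
  have "\<exists>!M. Pm lam M"
    using Pm_exists[OF assms] Pm_unique[OF assms] by blast
  then show ?thesis unfolding nu_Pm_def by (rule theI')
qed


definition cz :: "real \<Rightarrow> real" where "cz lam = lam / (4 * (1 - lam))"

fun Aset :: "real \<Rightarrow> nat \<Rightarrow> real set" where
  "Aset lam 0 = {0 .. cz lam}"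
| "Aset lam (Suc n) = tau lam 0 ` Aset lam n \<union> tau lam (1/4) ` Aset lam n"

lemma cz_eq: "lam < 1 \<Longrightarrow> lam * (cz lam + 1/4) = cz lam"
  unfolding cz_def by (simp add: field_simps)

lemma cz_pos: "0 < lam \<Longrightarrow> lam < 1 \<Longrightarrow> 0 < cz lam"
  unfolding cz_def by simp

lemma tau_cz:
  assumes "0 < lam" "lam < 1" "x \<in> {0..cz lam}" "d = 0 \<or> d = 1/4"
  shows "tau lam d x \<in> {0..cz lam}"
proof -
  have "lam * (x + d) \<le> lam * (cz lam + 1/4)"
    using assms by (intro mult_left_mono) auto
  then show ?thesis using assms cz_eq[of lam] unfolding tau_def by auto
qed

lemma cont_tau: "continuous_on S (tau lam d)"
  unfolding tau_def by (intro continuous_intros)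

lemma A_sub: "0 < lam \<Longrightarrow> lam < 1 \<Longrightarrow> Aset lam n \<subseteq> {0..cz lam}"
proof (induction n)
  case 0 then show ?case by simp
next
  case (Suc n)
  then show ?case using tau_cz[of lam _ 0] tau_cz[of lam _ "1/4"] by auto
qed

lemma A_Suc_sub: "0 < lam \<Longrightarrow> lam < 1 \<Longrightarrow> Aset lam (Suc n) \<subseteq> Aset lam n"
proof (induction n)
  case 0 then show ?case using tau_cz[of lam _ 0] tau_cz[of lam _ "1/4"] by auto
next
  case (Suc n)
  then show ?case by (auto simp del: Aset.simps(2) simp: Aset.simps(2)[of lam "Suc n"] Aset.simps(2)[of lam n])
qed

lemma A_decr: "0 < lam \<Longrightarrow> lam < 1 \<Longrightarrow> m \<le> n \<Longrightarrow> Aset lam n \<subseteq> Aset lam m"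
  using lift_Suc_antimono_le[of "Aset lam" m n] A_Suc_sub by blast

lemma A_compact: "compact (Aset lam n)"
  by (induction n) (auto intro!: compact_Un compact_continuous_image cont_tau)

lemma A_ne: "0 < lam \<Longrightarrow> lam < 1 \<Longrightarrow> Aset lam n \<noteq> {}"
  by (induction n) (auto simp: cz_def)

definition Kset :: "real \<Rightarrow> real set" where "Kset lam = (\<Inter>n. Aset lam n)"

lemma K_compact: "compact (Kset lam)"
proof -
  have "Kset lam = Aset lam 0 \<inter> (\<Inter>n. Aset lam n)" unfolding Kset_def by blast
  moreover have "closed (\<Inter>n. Aset lam n)" by (intro closed_INT ballI compact_imp_closed A_compact)
  ultimately show ?thesis using compact_Int_closed[OF A_compact] by metis
qed

lemma K_ne: assumes "0 < lam" "lam < 1" shows "Kset lam \<noteq> {}"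
  unfolding Kset_def
proof (rule compact_nest)
  show "\<And>n. compact (Aset lam n)" by (rule A_compact)
  show "\<And>n. Aset lam n \<noteq> {}" by (rule A_ne[OF assms])
  show "\<And>m n. m \<le> n \<Longrightarrow> Aset lam n \<subseteq> Aset lam m" by (rule A_decr[OF assms])
qed

lemma tau_inj: "0 < lam \<Longrightarrow> tau lam d x = tau lam d y \<Longrightarrow> x = y"
  unfolding tau_def by simp

lemma K_inv:
  assumes "0 < lam" "lam < 1"
  shows "Kset lam = tau lam 0 ` Kset lam \<union> tau lam (1/4) ` Kset lam"
proof
  show "tau lam 0 ` Kset lam \<union> tau lam (1/4) ` Kset lam \<subseteq> Kset lam"
  proof -
    have "tau lam d x \<in> Aset lam n" if "x \<in> Kset lam" "d = 0 \<or> d = 1/4" for x d n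
    proof -
      have "x \<in> Aset lam n" using that unfolding Kset_def by auto
      then have h0: "tau lam 0 x \<in> Aset lam (Suc n)" and h1: "tau lam (1/4) x \<in> Aset lam (Suc n)"
        by simp_all
      then have "tau lam d x \<in> Aset lam (Suc n)" using that(2) by blast
      then show ?thesis using A_Suc_sub[OF assms] by blast
    qed
    then show ?thesis unfolding Kset_def by auto
  qed
next
  show "Kset lam \<subseteq> tau lam 0 ` Kset lam \<union> tau lam (1/4) ` Kset lam"
  proof
    fix x assume x: "x \<in> Kset lam"
    define y0 where "y0 = x / lam"
    define y1 where "y1 = x / lam - 1/4"
    have e0: "tau lam 0 y0 = x" and e1: "tau lam (1/4) y1 = x"
      using assms unfolding y0_def y1_def tau_def by (auto simp: field_simps)
    have pre0: "tau lam 0 y = x \<Longrightarrow> y = y0" for y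
      using e0 tau_inj[OF assms(1), of 0 y y0] by auto
    have pre1: "tau lam (1/4) y = x \<Longrightarrow> y = y1" for y
      using e1 tau_inj[OF assms(1), of "1/4" y y1] by auto
    show "x \<in> tau lam 0 ` Kset lam \<union> tau lam (1/4) ` Kset lam"
    proof (cases "y0 \<in> Kset lam")
      case True then show ?thesis using e0 by (metis UnI1 image_eqI)
    next
      case False
      then obtain n0 where n0: "y0 \<notin> Aset lam n0" unfolding Kset_def by auto
      have "y1 \<in> Aset lam n" if "n \<ge> n0" for n
      proof -
        have "x \<in> Aset lam (Suc n)" using x unfolding Kset_def by blast
        then have "x \<in> tau lam 0 ` Aset lam n \<union> tau lam (1/4) ` Aset lam n" by (simp only: Aset.simps)
        then consider (z) y where "y \<in> Aset lam n" "x = tau lam 0 y"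
          | (q) y where "y \<in> Aset lam n" "x = tau lam (1/4) y" by blast
        then show ?thesis
        proof cases
          case (z y)
          then have "y = y0" using pre0[of y] by simp
          then have "y0 \<in> Aset lam n0" using z A_decr[OF assms that] by blast
          then show ?thesis using n0 by simp
        next
          case (q y)
          then have "y = y1" using pre1[of y] by simp
          then show ?thesis using q by simp
        qed
      qed
      then have "y1 \<in> Aset lam n" for n
        using A_decr[OF assms, of n "max n n0"] by auto
      then have "y1 \<in> Kset lam" unfolding Kset_def by auto
      then show ?thesis using e1 by (metis UnI2 image_eqI)
    qed
  qed
qed

lemma inv_bound:
  assumes "0 < lam" "lam < 1" "X \<noteq> {}" "compact X" "X = tau lam 0 ` X \<union> tau lam (1/4) ` X"
  shows "X \<subseteq> {0..cz lam}"
proof -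
  obtain M where M: "M \<in> X" "\<And>t. t \<in> X \<Longrightarrow> t \<le> M"
    using compact_attains_sup[OF assms(4,3)] by blast
  obtain m where m: "m \<in> X" "\<And>t. t \<in> X \<Longrightarrow> m \<le> t"
    using compact_attains_inf[OF assms(4,3)] by blast
  have supX: "X \<subseteq> tau lam 0 ` X \<union> tau lam (1/4) ` X" using assms(5) by (metis order_refl)
  obtain d y where dy: "d = 0 \<or> d = 1/4" "y \<in> X" "M = lam * (y + d)"
    using M(1) supX unfolding tau_def by blast
  have d0: "0 \<le> d" "d \<le> 1/4" using dy(1) by auto
  have "y + d \<le> M + 1/4" using M(2)[OF dy(2)] d0 by linarith
  then have "lam * (y + d) \<le> lam * (M + 1/4)" using assms(1) by (intro mult_left_mono) auto
  then have "M \<le> lam * (M + 1/4)" using dy(3) by simp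
  then have "M * (1 - lam) \<le> lam / 4" by (simp add: algebra_simps)
  then have Mb: "M \<le> cz lam" using assms(1,2) unfolding cz_def by (simp add: field_simps)
  obtain d' y' where dy': "d' = 0 \<or> d' = 1/4" "y' \<in> X" "m = lam * (y' + d')"
    using m(1) supX unfolding tau_def by blast
  have d0': "0 \<le> d'" using dy'(1) by auto
  have "m \<le> y' + d'" using m(2)[OF dy'(2)] d0' by linarith
  then have "lam * m \<le> lam * (y' + d')" using assms(1) by (intro mult_left_mono) auto
  then have "lam * m \<le> m" using dy'(3) by simp
  then have "0 \<le> (1 - lam) * m" by (simp add: algebra_simps)
  then have m0: "0 \<le> m" using assms(2) by (simp add: zero_le_mult_iff)
  show ?thesis
  proof
    fix t assume "t \<in> X"
    then have "m \<le> t" "t \<le> M" using m(2) M(2) by blast+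
    then show "t \<in> {0..cz lam}" using m0 Mb by simp
  qed
qed

lemma inv_unique:
  assumes "0 < lam" "lam < 1" "X \<noteq> {}" "compact X" "X = tau lam 0 ` X \<union> tau lam (1/4) ` X"
  shows "X = Kset lam"
proof
  have supX: "X \<subseteq> tau lam 0 ` X \<union> tau lam (1/4) ` X" using assms(5) by (metis order_refl)
  have XA: "X \<subseteq> Aset lam n" for n
  proof (induction n)
    case 0 then show ?case using inv_bound[OF assms] by simp
  next
    case (Suc n)
    have "X \<subseteq> tau lam 0 ` Aset lam n \<union> tau lam (1/4) ` Aset lam n"
      using Suc supX by blast
    then show ?case by simp
  qed
  then show "X \<subseteq> Kset lam" unfolding Kset_def by blast
next
  have sub0: "tau lam 0 ` X \<subseteq> X" using assms(5) by (metis Un_upper1)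
  have sub1: "tau lam (1/4) ` X \<subseteq> X" using assms(5) by (metis Un_upper2)
  have XB: "X \<subseteq> {0..cz lam}" by (rule inv_bound[OF assms])
  have approx: "\<forall>x\<in>Aset lam n. \<exists>x'\<in>X. \<bar>x - x'\<bar> \<le> lam^n * cz lam" for n
  proof (induction n)
    case 0
    obtain x' where "x' \<in> X" using assms(3) by blast
    then show ?case using XB by (force simp: abs_le_iff)
  next
    case (Suc n)
    show ?case
    proof
      fix x assume "x \<in> Aset lam (Suc n)"
      then obtain d y where dy: "d = 0 \<or> d = 1/4" "y \<in> Aset lam n" "x = tau lam d y"
        by (simp only: Aset.simps) blast
      obtain y' where y': "y' \<in> X" "\<bar>y - y'\<bar> \<le> lam^n * cz lam" using Suc dy(2) by blast
      have "tau lam d y' \<in> X" using dy(1) y'(1) sub0 sub1 by blast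
      moreover have "x - tau lam d y' = lam * (y - y')"
        using dy unfolding tau_def by (auto simp: algebra_simps)
      then have "\<bar>x - tau lam d y'\<bar> = lam * \<bar>y - y'\<bar>"
        using assms(1) by (simp add: abs_mult)
      moreover have "lam * \<bar>y - y'\<bar> \<le> lam^Suc n * cz lam"
        using y'(2) assms(1) by (simp add: mult_left_mono mult.assoc)
      ultimately show "\<exists>x'\<in>X. \<bar>x - x'\<bar> \<le> lam^Suc n * cz lam" by force
    qed
  qed
  show "Kset lam \<subseteq> X"
  proof
    fix x assume x: "x \<in> Kset lam"
    have "x \<in> closure X"
      unfolding closure_approachable
    proof (intro allI impI)
      fix e :: real assume e: "e > 0"
      obtain n where n: "lam^n < e / cz lam"
        using real_arch_pow_inv[of "e / cz lam" lam] e cz_pos[OF assms(1,2)] assms(2) by auto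
      have "x \<in> Aset lam n" using x unfolding Kset_def by auto
      then obtain x' where x': "x' \<in> X" "\<bar>x - x'\<bar> \<le> lam^n * cz lam" using approx by blast
      moreover have "lam^n * cz lam < e" using n cz_pos[OF assms(1,2)] by (simp add: field_simps)
      ultimately have "\<bar>x' - x\<bar> < e" using abs_minus_commute[of x x'] by linarith
      then show "\<exists>y\<in>X. dist y x < e" using x'(1) unfolding dist_real_def by blast
    qed
    then show "x \<in> X" using compact_imp_closed[OF assms(4)] by (simp add: closure_closed)
  qed
qed

lemma XL_props:
  assumes "0 < lam" "lam < 1"
  shows "compact (XL lam)" "XL lam \<subseteq> {0..cz lam}"
    "\<And>x. x \<in> XL lam \<Longrightarrow> tau lam 0 x \<in> XL lam"
    "\<And>x. x \<in> XL lam \<Longrightarrow> tau lam (1/4) x \<in> XL lam"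
proof -
  let ?P = "\<lambda>X. X \<noteq> {} \<and> compact X \<and> X = tau lam 0 ` X \<union> tau lam (1/4) ` X"
  have "\<exists>!X. ?P X"
  proof
    show "?P (Kset lam)" by (intro conjI K_ne[OF assms] K_compact K_inv[OF assms])
    show "\<And>X. ?P X \<Longrightarrow> X = Kset lam" by (elim conjE, rule inv_unique[OF assms], assumption+)
  qed
  then have P: "?P (XL lam)" unfolding XL_def by (rule theI')
  have ne: "XL lam \<noteq> {}" using P by (rule conjunct1)
  have cp: "compact (XL lam)" using P by (metis (no_types, lifting))
  have eq: "XL lam = tau lam 0 ` XL lam \<union> tau lam (1/4) ` XL lam" using P by (metis (no_types, lifting))
  show "compact (XL lam)" by (rule cp)
  show "XL lam \<subseteq> {0..cz lam}" by (rule inv_bound[OF assms ne cp eq])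
  have sub0: "tau lam 0 ` XL lam \<subseteq> XL lam" using eq by (metis Un_upper1)
  have sub1: "tau lam (1/4) ` XL lam \<subseteq> XL lam" using eq by (metis Un_upper2)
  show "\<And>x. x \<in> XL lam \<Longrightarrow> tau lam 0 x \<in> XL lam" using sub0 by blast
  show "\<And>x. x \<in> XL lam \<Longrightarrow> tau lam (1/4) x \<in> XL lam" using sub1 by blast
qed


lemma tau_word_Nil[simp]: "tau_word lam [] x = x"
  unfolding tau_word_def by simp

lemma tau_word_Cons[simp]: "tau_word lam (d # w) x = tau_word lam w (tau lam d x)"
  unfolding tau_word_def by simp

lemma W_word_Nil[simp]: "W_word lam [] x = 1"
  unfolding W_word_def by simp

lemma W_word_Cons: "W_word lam (d # w) x = Wfun lam (tau lam d x) * W_word lam w (tau lam d x)"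
proof -
  have "W_word lam (d # w) x = (\<Prod>k<Suc (length w). Wfun lam (tau_word lam (take (Suc k) (d # w)) x))"
    unfolding W_word_def by simp
  also have "\<dots> = Wfun lam (tau_word lam (take (Suc 0) (d # w)) x) *
      (\<Prod>k<length w. Wfun lam (tau_word lam (take (Suc (Suc k)) (d # w)) x))"
    by (rule prod.lessThan_Suc_shift)
  also have "\<dots> = Wfun lam (tau lam d x) * W_word lam w (tau lam d x)"
    unfolding W_word_def by simp
  finally show ?thesis .
qed

lemma W0_Nil[simp]: "[] \<in> W0" unfolding W0_def by simp

lemma W0_Cons0: "(0 # w \<in> W0) \<longleftrightarrow> w \<noteq> [] \<and> w \<in> W0"
  unfolding W0_def by auto

lemma W0_Cons1: "((1/4) # w \<in> W0) \<longleftrightarrow> w \<in> W0"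
  unfolding W0_def by auto

lemma W0_Cons_other: "d \<noteq> 0 \<Longrightarrow> d \<noteq> 1/4 \<Longrightarrow> d # w \<notin> W0"
  unfolding W0_def by auto

definition Lw :: "nat \<Rightarrow> real list set" where "Lw n = {w \<in> W0. length w \<le> n}"

lemma Lw_finite: "finite (Lw n)"
proof -
  have "Lw n \<subseteq> {xs. set xs \<subseteq> {0, 1/4} \<and> length xs \<le> n}"
    unfolding Lw_def W0_def by auto
  moreover have "finite {xs. set xs \<subseteq> {0::real, 1/4} \<and> length xs \<le> n}"
    by (rule finite_lists_length_le) simp
  ultimately show ?thesis by (rule finite_subset)
qed

lemma Lw_0: "Lw 0 = {[]}" unfolding Lw_def by auto

lemma Lw_Suc: "Lw (Suc n) = insert [] ((Cons 0) ` (Lw n - {[]}) \<union> (Cons (1/4)) ` Lw n)"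
proof (rule set_eqI)
  fix w
  show "w \<in> Lw (Suc n) \<longleftrightarrow> w \<in> insert [] ((Cons 0) ` (Lw n - {[]}) \<union> (Cons (1/4)) ` Lw n)"
  proof (cases w)
    case Nil then show ?thesis unfolding Lw_def by simp
  next
    case (Cons d v)
    have "d = 0 \<or> d = 1/4 \<or> (d \<noteq> 0 \<and> d \<noteq> 1/4)" by blast
    then show ?thesis
    proof (elim disjE)
      assume "d = 0" then show ?thesis using Cons unfolding Lw_def by (auto simp: W0_Cons0)
    next
      assume d: "d = 1/4"
      have "w \<in> Lw (Suc n) \<longleftrightarrow> v \<in> Lw n" unfolding Lw_def Cons d by (simp add: W0_Cons1)
      moreover have "w \<in> insert [] ((Cons 0) ` (Lw n - {[]}) \<union> (Cons (1/4)) ` Lw n) \<longleftrightarrow> v \<in> Lw n"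
        unfolding Cons d by auto
      ultimately show ?thesis by simp
    next
      assume "d \<noteq> 0 \<and> d \<noteq> 1/4"
      then show ?thesis using Cons W0_Cons_other[of d v] unfolding Lw_def by auto
    qed
  qed
qed


lemma Wfun_tau: "lam \<noteq> 0 \<Longrightarrow> Wfun lam (tau lam d x) = (cos (2 * pi * (x + d)))\<^sup>2"
  unfolding Wfun_def tau_def by (simp add: mult.assoc)

lemma Wfun_sum: "lam \<noteq> 0 \<Longrightarrow> Wfun lam (tau lam 0 x) + Wfun lam (tau lam (1/4) x) = 1"
proof -
  assume l: "lam \<noteq> 0"
  have "cos (2 * pi * (x + 1/4)) = - sin (2 * pi * x)"
    by (simp add: distrib_left cos_add)
  then show ?thesis using l by (simp add: Wfun_tau)
qed

lemma Wfun_nonneg: "0 \<le> Wfun lam x" unfolding Wfun_def by simp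

lemma S_rec:
  fixes f :: "real \<Rightarrow> real" and S :: "nat \<Rightarrow> real \<Rightarrow> real"
  assumes lam0: "lam \<noteq> 0"
    and feq: "\<And>t. f t = (cos (2*pi*t))\<^sup>2 * f (lam * t)"
    and Sdef: "\<And>n x. S n x = (\<Sum>w\<in>Lw n. W_word lam w x * f (tau_word lam w x))"
  shows "S 0 x = f x"
    and "S (Suc n) x = Wfun lam (tau lam 0 x) * S n (tau lam 0 x) + Wfun lam (tau lam (1/4) x) * S n (tau lam (1/4) x)"
proof -
  show "S 0 x = f x" unfolding Sdef Lw_0 by simp
  define F where "F w y = W_word lam w y * f (tau_word lam w y)" for w y
  have FC: "F (d # w) y = Wfun lam (tau lam d y) * F w (tau lam d y)" for d w y
    unfolding F_def by (simp add: W_word_Cons)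
  have fin: "finite (Lw n)" by (rule Lw_finite)
  have Nil_in: "[] \<in> Lw n" unfolding Lw_def by simp
  have d1: "[] \<notin> (Cons 0) ` (Lw n - {[]}) \<union> (Cons (1/4)) ` Lw n" by auto
  have d2: "(Cons 0) ` (Lw n - {[]}) \<inter> (Cons (1/4)) ` Lw n = {}" by auto
  have "S (Suc n) x = (\<Sum>w\<in>insert [] ((Cons 0) ` (Lw n - {[]}) \<union> (Cons (1/4)) ` Lw n). F w x)"
    unfolding Sdef Lw_Suc F_def ..
  also have "\<dots> = F [] x + (\<Sum>w\<in>(Cons 0) ` (Lw n - {[]}) \<union> (Cons (1/4)) ` Lw n. F w x)"
    by (rule sum.insert) (use fin d1 in auto)
  also have "(\<Sum>w\<in>(Cons 0) ` (Lw n - {[]}) \<union> (Cons (1/4)) ` Lw n. F w x)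
      = (\<Sum>w\<in>(Cons 0) ` (Lw n - {[]}). F w x) + (\<Sum>w\<in>(Cons (1/4)) ` Lw n. F w x)"
    by (rule sum.union_disjoint) (use fin d2 in auto)
  also have "(\<Sum>w\<in>(Cons 0) ` (Lw n - {[]}). F w x) = (\<Sum>w\<in>Lw n - {[]}. F (0 # w) x)"
    by (rule sum.reindex_cong[where l="Cons 0"]) auto
  also have "\<dots> = (\<Sum>w\<in>Lw n. F (0 # w) x) - F [0] x"
    using fin Nil_in by (simp add: sum_diff1)
  also have "(\<Sum>w\<in>(Cons (1/4)) ` Lw n. F w x) = (\<Sum>w\<in>Lw n. F ((1/4) # w) x)"
    by (rule sum.reindex_cong[where l="Cons (1/4)"]) auto
  finally have "S (Suc n) x = F [] x + ((\<Sum>w\<in>Lw n. F (0 # w) x) - F [0] x + (\<Sum>w\<in>Lw n. F ((1/4) # w) x))" .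
  moreover have "F [] x = F [0] x"
  proof -
    have "Wfun lam (tau lam 0 x) = (cos (2*pi*x))\<^sup>2" using Wfun_tau[OF lam0, of 0 x] by simp
    moreover have "tau lam 0 x = lam * x" by (simp add: tau_def)
    ultimately show ?thesis unfolding F_def using feq[of x] by (simp add: W_word_Cons)
  qed
  moreover have "(\<Sum>w\<in>Lw n. F (d # w) x) = Wfun lam (tau lam d x) * S n (tau lam d x)" for d
    unfolding FC Sdef F_def by (simp add: sum_distrib_left W_word_Cons mult.assoc)
  ultimately show "S (Suc n) x = Wfun lam (tau lam 0 x) * S n (tau lam 0 x) + Wfun lam (tau lam (1/4) x) * S n (tau lam (1/4) x)"
    by simp
qed

lemma no_int_between:
  assumes "real_of_int a < x" "x < real_of_int a + 1"
  shows "x \<noteq> real_of_int b"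
proof
  assume "x = real_of_int b"
  then have "a < b" "b < a + 1" using assms by linarith+
  then show False by linarith
qed

lemma odd_ne_even_real: "real_of_int (2*k+1) \<noteq> 2 * real_of_int j"
proof
  assume "real_of_int (2*k+1) = 2 * real_of_int j"
  then have "real_of_int (2*k+1) = real_of_int (2*j)" by simp
  then have "2*k+1 = 2*j" by (simp only: of_int_eq_iff)
  then show False by presburger
qed

lemma comb:
  fixes lam :: real and Z :: "real set"
  assumes l: "0 < lam" "lam < 1"
    and hyp: "\<forall>n::nat. n \<ge> 1 \<longrightarrow> lam \<noteq> 1 - 1 / (2 * real n)"
    and Zc: "compact Z" and Zne: "Z \<noteq> {}" and Zpos: "\<And>u. u \<in> Z \<Longrightarrow> 0 \<le> u"
    and c0: "\<And>u. u \<in> Z \<Longrightarrow> \<not>(\<exists>k::int. u = 2 * real_of_int k + 1) \<Longrightarrow> lam * u \<in> Z"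
    and c1: "\<And>u. u \<in> Z \<Longrightarrow> \<not>(\<exists>k::int. u = 2 * real_of_int k) \<Longrightarrow> lam * (u+1) \<in> Z"
  shows "0 \<in> Z"
proof (rule ccontr)
  assume nz: "0 \<notin> Z"
  obtain m where m: "m \<in> Z" "\<And>z. z \<in> Z \<Longrightarrow> m \<le> z"
    using compact_attains_inf[OF Zc Zne] by blast
  have mpos: "0 < m" using Zpos[OF m(1)] nz m(1) by (cases "m = 0") auto
  have "\<exists>k::int. m = 2*k+1"
  proof (rule ccontr)
    assume "\<not>(\<exists>k::int. m = 2 * real_of_int k + 1)"
    then have "lam * m \<in> Z" using c0 m(1) by blast
    then have "m \<le> lam * m" using m(2) by blast
    then show False using mpos l by (simp add: mult_le_cancel_right1)
  qed
  then obtain k :: int where k: "m = 2 * real_of_int k + 1" by blast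
  have k0: "k \<ge> 0" using mpos k by linarith
  have mi: "m = real_of_int (2*k+1)" using k by simp
  have noint: "\<not>(\<exists>j::int. u = 2 * real_of_int j + 1) \<and> \<not>(\<exists>j::int. u = 2 * real_of_int j)" if "m < u" "u < m+1" for u
  proof -
    have "u \<noteq> real_of_int b" for b
      by (rule no_int_between[of "2*k+1"]) (use that mi in auto)
    then show ?thesis by (metis of_int_add of_int_mult of_int_numeral of_int_1)
  qed
  have chain: "\<exists>j\<ge>1. lam^j * x = m \<and> (\<forall>i<j. lam^i * x \<in> Z \<and> m < lam^i * x \<and> lam^i * x < m+1)"
    if x: "x \<in> Z" "m < x" "x < m+1" for x
  proof -
    have xpos: "0 < x" using x mpos by linarith
    obtain n where "lam^n < m / x" using real_arch_pow_inv[of "m/x" lam] mpos xpos l by auto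
    then have "lam^n * x < m" using xpos by (simp add: field_simps)
    then have ex: "\<exists>i. lam^i * x \<le> m" by (intro exI[of _ n]) simp
    define j where "j = (LEAST i. lam^i * x \<le> m)"
    have jle: "lam^j * x \<le> m" unfolding j_def by (rule LeastI_ex[OF ex])
    have jmin: "m < lam^i * x" if "i < j" for i
      using not_less_Least[OF that[unfolded j_def]] by simp
    have j1: "j \<ge> 1" using jle x(2) by (cases j) auto
    have upper: "lam^i * x < m+1" for i
    proof -
      have "lam^i \<le> 1" using l by (simp add: power_le_one)
      then have "lam^i * x \<le> x" using xpos by (simp add: mult_le_cancel_right1)
      then show ?thesis using x(3) by linarith
    qed
    have inZ: "i \<le> j \<Longrightarrow> lam^i * x \<in> Z" for i
    proof (induction i)
      case 0 then show ?case using x(1) by simp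
    next
      case (Suc i)
      then have "lam^i * x \<in> Z" by simp
      moreover have "m < lam^i * x" using jmin Suc.prems by simp
      ultimately have "lam * (lam^i * x) \<in> Z" using c0 noint upper by blast
      then show ?case by (simp add: mult.assoc)
    qed
    have "lam^j * x = m" using jle m(2)[OF inZ[OF order_refl]] by linarith
    then show ?thesis using j1 inZ jmin upper by auto
  qed
  define p where "p = lam * (m+1)"
  have meven: "\<not>(\<exists>j::int. m = 2 * real_of_int j)" using odd_ne_even_real[of k] mi by auto
  have pZ: "p \<in> Z" unfolding p_def by (rule c1[OF m(1) meven])
  have pm: "m \<le> p" using m(2)[OF pZ] .
  have pne: "p \<noteq> m"
  proof
    assume "p = m"
    then have "lam * (2*k+2) = 2*k+1" unfolding p_def k by (simp add: add.commute)
    then have "lam = 1 - 1 / (2 * real (nat (k+1)))" using k0 by (simp add: field_simps)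
    moreover have "nat (k+1) \<ge> 1" using k0 by simp
    ultimately show False using hyp by blast
  qed
  have pl: "p < m+1" unfolding p_def using l mpos by simp
  have pb: "m < p" using pm pne by simp
  obtain jp where jp: "jp \<ge> 1" "lam^jp * p = m" "\<And>i. i < jp \<Longrightarrow> lam^i * p \<in> Z \<and> m < lam^i * p \<and> lam^i * p < m+1"
    using chain[OF pZ pb pl] by blast
  define g1 where "g1 = lam^(jp-1) * p"
  have g1: "g1 \<in> Z" "m < g1" "g1 < m+1" using jp(3)[of "jp-1"] jp(1) unfolding g1_def by auto
  have lg1: "lam * g1 = m"
  proof -
    obtain a where a: "jp = Suc a" using jp(1) by (cases jp) auto
    show ?thesis using jp(2) unfolding g1_def a by (simp add: mult.assoc)
  qed
  define q1 where "q1 = lam * (g1 + 1)"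
  have q1e: "q1 = m + lam" unfolding q1_def using lg1 by (simp add: algebra_simps)
  have q1Z: "q1 \<in> Z" unfolding q1_def using c1 g1 noint by blast
  have q1b: "m < q1" "q1 < m+1" using q1e l by auto
  obtain j1 where j1: "j1 \<ge> 1" "lam^j1 * q1 = m" "\<And>i. i < j1 \<Longrightarrow> lam^i * q1 \<in> Z \<and> m < lam^i * q1 \<and> lam^i * q1 < m+1"
    using chain[OF q1Z q1b] by blast
  obtain z where z: "z \<in> Z" "m < z" "z < m+1" "lam * z \<in> Z" "m < lam * z" "lam * z < m+1" "lam * (lam * z) = m"
  proof (cases "jp \<ge> 2")
    case True
    define z where "z = lam^(jp-2) * p"
    obtain a where a: "jp = Suc (Suc a)" using True by (metis add_2_eq_Suc le_Suc_ex)
    have "lam * z = lam^(jp-1) * p" "lam * (lam * z) = lam^jp * p"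
      unfolding z_def a by (simp_all add: mult.assoc)
    note e12 = this
    show ?thesis
    proof (rule that[of z])
      show "z \<in> Z" "m < z" "z < m+1" using jp(3)[of "jp-2"] True unfolding z_def by auto
      show "lam * z \<in> Z" "m < lam * z" "lam * z < m+1" unfolding e12(1) using jp(3)[of "jp-1"] True by auto
      show "lam * (lam * z) = m" unfolding e12(2) by (rule jp(2))
    qed
  next
    case False
    then have jp1: "jp = 1" using jp(1) by simp
    show ?thesis
    proof (cases "j1 \<ge> 2")
      case True
      define z where "z = lam^(j1-2) * q1"
      obtain a where a: "j1 = Suc (Suc a)" using True by (metis add_2_eq_Suc le_Suc_ex)
      have "lam * z = lam^(j1-1) * q1" "lam * (lam * z) = lam^j1 * q1"
        unfolding z_def a by (simp_all add: mult.assoc)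
      note e12 = this
      show ?thesis
      proof (rule that[of z])
        show "z \<in> Z" "m < z" "z < m+1" using j1(3)[of "j1-2"] True unfolding z_def by auto
        show "lam * z \<in> Z" "m < lam * z" "lam * z < m+1" unfolding e12(1) using j1(3)[of "j1-1"] True by auto
        show "lam * (lam * z) = m" unfolding e12(2) by (rule j1(2))
      qed
    next
      case False
      then have "j1 = 1" using j1(1) by simp
      then have "lam * (m + lam) = m" using j1(2) q1e by simp
      moreover have "lam * p = m" using jp(2) jp1 by simp
      ultimately have "lam * p = lam * (m + lam)" by simp
      then have "p = m + lam" using l by simp
      then have "lam * m = m" unfolding p_def by (simp add: algebra_simps)
      then show ?thesis using l mpos by simp
    qed
  qed
  define q2 where "q2 = lam * (z + 1)"
  have q2Z: "q2 \<in> Z" unfolding q2_def using c1 z(1,2,3) noint by blast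
  have q2b: "m < q2" "q2 < m + 2" unfolding q2_def using z(5,6) l by (auto simp: algebra_simps)
  have q2odd: "\<not>(\<exists>j::int. q2 = 2 * real_of_int j + 1)"
  proof
    assume "\<exists>j::int. q2 = 2*j+1"
    then obtain j :: int where "q2 = 2 * real_of_int j + 1" by blast
    then have "k < j" "j < k+1" using q2b k by linarith+
    then show False by linarith
  qed
  define q3 where "q3 = lam * q2"
  have q3Z: "q3 \<in> Z" unfolding q3_def using c0[OF q2Z q2odd] .
  have q3e: "q3 = m + lam^2" unfolding q3_def q2_def using z(7) by (simp add: algebra_simps power2_eq_square)
  have lam2: "lam^2 < lam" using l by (simp add: power2_eq_square)
  have q3b: "m < q3" "q3 < m+1" using q3e l lam2 by auto
  obtain j2 where j2: "j2 \<ge> 1" "lam^j2 * q3 = m"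
    using chain[OF q3Z q3b] by blast
  have A: "lam^j1 * (m + lam) = m" using j1(2) q1e by simp
  have B: "lam^j2 * (m + lam^2) = m" using j2(2) q3e by simp
  have "j2 < j1"
  proof (rule ccontr)
    assume "\<not> j2 < j1"
    then have "lam^j2 \<le> lam^j1" using l by (simp add: power_decreasing)
    moreover have "m + lam^2 < m + lam" using lam2 by simp
    ultimately have "lam^j2 * (m + lam^2) < lam^j1 * (m + lam)"
      using l mpos by (intro mult_le_less_imp_less) auto
    then show False using A B by simp
  qed
  then have "lam^j1 \<le> lam^(Suc j2)" using l by (intro power_decreasing) auto
  then have "m \<le> lam^(Suc j2) * (m + lam)" using A l mpos
    by (metis add_pos_pos mult_right_mono less_le_not_le)
  also have "\<dots> = lam^j2 * (lam * m + lam^2)" by (simp add: algebra_simps power2_eq_square)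
  also have "\<dots> < lam^j2 * (m + lam^2)" using l mpos by simp
  also have "\<dots> = m" by (rule B)
  finally show False by simp
qed


lemma main_abstract:
  fixes lam :: real and f :: "real \<Rightarrow> real" and X :: "real set" and S :: "nat \<Rightarrow> real \<Rightarrow> real"
  assumes l: "0 < lam" "lam < 1"
    and hyp: "\<forall>n::nat. n \<ge> 1 \<longrightarrow> lam \<noteq> 1 - 1 / (2 * real n)"
    and fc: "continuous_on UNIV f" and f0: "f 0 = 1" and fnn: "\<And>t. 0 \<le> f t" and fle: "\<And>t. f t \<le> 1"
    and feq: "\<And>t. f t = (cos (2*pi*t))\<^sup>2 * f (lam * t)"
    and Xc: "compact X" and Xpos: "\<And>x. x \<in> X \<Longrightarrow> 0 \<le> x"
    and X0: "\<And>x. x \<in> X \<Longrightarrow> tau lam 0 x \<in> X" and X1: "\<And>x. x \<in> X \<Longrightarrow> tau lam (1/4) x \<in> X"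
    and Sdef: "\<And>n x. S n x = (\<Sum>w\<in>Lw n. W_word lam w x * f (tau_word lam w x))"
  shows "uniform_limit X S (\<lambda>x. 1) sequentially"
proof -
  have lam0: "lam \<noteq> 0" using l by simp
  note S0 = S_rec(1)[OF lam0 feq Sdef]
  note SS = S_rec(2)[OF lam0 feq Sdef]
  define W0f where "W0f x = Wfun lam (tau lam 0 x)" for x
  define W1f where "W1f x = Wfun lam (tau lam (1/4) x)" for x
  have Wsum: "W0f x + W1f x = 1" for x unfolding W0f_def W1f_def by (rule Wfun_sum[OF lam0])
  have W0nn: "0 \<le> W0f x" and W1nn: "0 \<le> W1f x" for x unfolding W0f_def W1f_def by (rule Wfun_nonneg)+
  have SSx: "S (Suc n) x = W0f x * S n (tau lam 0 x) + W1f x * S n (tau lam (1/4) x)" for n x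
    unfolding W0f_def W1f_def by (rule SS)
  have contW: "continuous_on UNIV (Wfun lam)" unfolding Wfun_def using lam0 by (intro continuous_intros) auto
  have contT: "continuous_on UNIV (tau lam d)" for d unfolding tau_def by (intro continuous_intros)
  have Scont: "continuous_on UNIV (S n)" for n
  proof (induction n)
    case 0 then show ?case using fc S0 by (simp add: fun_eq_iff[symmetric])
  next
    case (Suc n)
    have e: "S (Suc n) = (\<lambda>x. Wfun lam (tau lam 0 x) * S n (tau lam 0 x) + Wfun lam (tau lam (1/4) x) * S n (tau lam (1/4) x))"
      using SS by (simp add: fun_eq_iff)
    show ?case unfolding e
      by (intro continuous_on_add continuous_on_mult continuous_on_compose2[OF contW contT]
          continuous_on_compose2[OF Suc.IH contT]) auto
  qed
  have Sbd: "0 \<le> S n x \<and> S n x \<le> 1" for n x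
  proof (induction n arbitrary: x)
    case 0 then show ?case using fnn fle S0 by simp
  next
    case (Suc n)
    have a: "0 \<le> W0f x * S n (tau lam 0 x)" "0 \<le> W1f x * S n (tau lam (1/4) x)"
      using Suc W0nn W1nn by simp_all
    have "W0f x * S n (tau lam 0 x) \<le> W0f x" "W1f x * S n (tau lam (1/4) x) \<le> W1f x"
      using Suc W0nn W1nn by (simp_all add: mult_left_le)
    then show ?case using a Wsum[of x] SSx[of n x] by linarith
  qed
  have Smono: "S n x \<le> S (Suc n) x" for n x
  proof (induction n arbitrary: x)
    case 0
    have "f x = W0f x * f (tau lam 0 x)"
      unfolding W0f_def using feq[of x] Wfun_tau[OF lam0, of 0 x] by (simp add: tau_def)
    moreover have "0 \<le> W1f x * f (tau lam (1/4) x)" using W1nn fnn by simp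
    ultimately show ?case using SSx[of 0 x] S0 by simp
  next
    case (Suc n)
    have "W0f x * S n (tau lam 0 x) \<le> W0f x * S (Suc n) (tau lam 0 x)"
      using Suc W0nn by (simp add: mult_left_mono)
    moreover have "W1f x * S n (tau lam (1/4) x) \<le> W1f x * S (Suc n) (tau lam (1/4) x)"
      using Suc W1nn by (simp add: mult_left_mono)
    ultimately show ?case using SSx[of n x] SSx[of "Suc n" x] by linarith
  qed
  have Sinc: "incseq (\<lambda>n. S n x)" for x by (rule incseq_SucI) (rule Smono)
  have Smono_le: "m \<le> n \<Longrightarrow> S m x \<le> S n x" for m n x using Sinc[of x] by (simp add: incseq_def)
  define h where "h x = (SUP n. S n x)" for x
  have Slim: "(\<lambda>n. S n x) \<longlonglongrightarrow> h x" for x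
  proof -
    have "bdd_above (range (\<lambda>n. S n x))" by (rule bdd_aboveI[where M=1]) (use Sbd in auto)
    then show ?thesis unfolding h_def by (rule LIMSEQ_incseq_SUP[OF _ Sinc])
  qed
  have Sle_h: "S n x \<le> h x" for n x by (rule incseq_le[OF Sinc Slim])
  have hle: "h x \<le> 1" for x by (rule LIMSEQ_le_const2[OF Slim]) (use Sbd in auto)
  have hrec: "h x = W0f x * h (tau lam 0 x) + W1f x * h (tau lam (1/4) x)" for x
  proof -
    have "(\<lambda>n. S (Suc n) x) \<longlonglongrightarrow> h x" using Slim[of x] by (rule LIMSEQ_Suc)
    moreover have "(\<lambda>n. S (Suc n) x) \<longlonglongrightarrow> W0f x * h (tau lam 0 x) + W1f x * h (tau lam (1/4) x)"
      unfolding SSx by (intro tendsto_intros Slim)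
    ultimately show ?thesis by (rule LIMSEQ_unique)
  qed
  have h1: "h x = 1" if xX: "x \<in> X" for x
  proof -
    define g where "g y = 1 - h y" for y
    have Xne: "X \<noteq> {}" using xX by auto
    have gbd: "0 \<le> g y" "g y \<le> 1" for y unfolding g_def using hle[of y] Sle_h[of 0 y] Sbd[of 0 y] by auto
    define M where "M = (SUP y\<in>X. g y)"
    have bdd: "bdd_above (g ` X)" by (rule bdd_aboveI[where M=1]) (use gbd in auto)
    have gM: "g y \<le> M" if "y \<in> X" for y unfolding M_def by (rule cSUP_upper[OF that bdd])
    show ?thesis
    proof (cases "M \<le> 0")
      case True
      then have "g x \<le> 0" using gM[OF xX] by simp
      then show ?thesis using hle[of x] unfolding g_def by simp
    next
      case False
      then have Mpos: "0 < M" by simp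
      define Z where "Z = X \<inter> (\<Inter>n. {y. S n y \<le> 1 - M})"
      define F where "F n = X \<inter> {y. S n y \<le> 1 - M}" for n
      have Fc: "compact (F n)" for n
        unfolding F_def by (intro compact_Int_closed Xc closed_Collect_le Scont continuous_on_const)
      have Fne: "F n \<noteq> {}" for n
      proof -
        obtain x0 where x0: "x0 \<in> X" "\<And>y. y \<in> X \<Longrightarrow> S n x0 \<le> S n y"
          using continuous_attains_inf[OF Xc Xne continuous_on_subset[OF Scont subset_UNIV]] by blast
        have "g y \<le> 1 - S n x0" if "y \<in> X" for y
          using x0(2)[OF that] Sle_h[of n y] unfolding g_def by simp
        then have "M \<le> 1 - S n x0" unfolding M_def by (intro cSUP_least Xne) auto
        then show ?thesis unfolding F_def using x0(1) by auto
      qed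
      have Fmono: "F n \<subseteq> F m" if "m \<le> n" for m n
      proof
        fix y assume "y \<in> F n"
        then have "y \<in> X" "S n y \<le> 1 - M" unfolding F_def by auto
        moreover have "S m y \<le> S n y" by (rule Smono_le[OF that])
        ultimately show "y \<in> F m" unfolding F_def by simp
      qed
      have "\<Inter>(range F) \<noteq> {}" by (rule compact_nest[OF Fc Fne Fmono])
      moreover have "\<Inter>(range F) = Z" unfolding F_def Z_def by blast
      ultimately have Zne: "Z \<noteq> {}" by simp
      have Zc: "compact Z"
        unfolding Z_def by (intro compact_Int_closed Xc closed_INT ballI closed_Collect_le Scont continuous_on_const)
      have ZX: "Z \<subseteq> X" unfolding Z_def by auto
      have hZ: "h y \<le> 1 - M" if "y \<in> Z" for y
        by (rule LIMSEQ_le_const2[OF Slim]) (use that in \<open>auto simp: Z_def\<close>)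
      have gZ: "g y = M" if "y \<in> Z" for y
      proof -
        have yX: "y \<in> X" using that ZX by blast
        have "g y \<le> M" by (rule gM[OF yX])
        moreover have "M \<le> g y" using hZ[OF that] unfolding g_def by simp
        ultimately show ?thesis by simp
      qed
      have intoZ: "z \<in> Z" if "z \<in> X" "g z = M" for z
      proof -
        have "S n z \<le> 1 - M" for n using Sle_h[of n z] that(2) unfolding g_def by simp
        then show ?thesis using that(1) unfolding Z_def by auto
      qed
      have grec: "g y = W0f y * g (tau lam 0 y) + W1f y * g (tau lam (1/4) y)" for y
        unfolding g_def using hrec[of y] Wsum[of y] by (simp add: algebra_simps)
      have child0: "tau lam 0 y \<in> Z" if "y \<in> Z" "W0f y > 0" for y
      proof -
        have yX: "y \<in> X" using that ZX by auto
        have a: "g (tau lam 0 y) \<le> M" "g (tau lam (1/4) y) \<le> M" using gM X0[OF yX] X1[OF yX] by auto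
        have "g (tau lam 0 y) \<ge> M"
        proof (rule ccontr)
          assume "\<not> g (tau lam 0 y) \<ge> M"
          then have "W0f y * g (tau lam 0 y) < W0f y * M" using that(2) by simp
          moreover have "W1f y * g (tau lam (1/4) y) \<le> W1f y * M" using a W1nn by (simp add: mult_left_mono)
          ultimately have "g y < (W0f y + W1f y) * M" using grec[of y] by (simp add: algebra_simps)
          then show False using Wsum[of y] gZ[OF that(1)] by simp
        qed
        then show ?thesis using intoZ[OF X0[OF yX]] a by simp
      qed
      have child1: "tau lam (1/4) y \<in> Z" if "y \<in> Z" "W1f y > 0" for y
      proof -
        have yX: "y \<in> X" using that ZX by auto
        have a: "g (tau lam 0 y) \<le> M" "g (tau lam (1/4) y) \<le> M" using gM X0[OF yX] X1[OF yX] by auto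
        have "g (tau lam (1/4) y) \<ge> M"
        proof (rule ccontr)
          assume "\<not> g (tau lam (1/4) y) \<ge> M"
          then have "W1f y * g (tau lam (1/4) y) < W1f y * M" using that(2) by simp
          moreover have "W0f y * g (tau lam 0 y) \<le> W0f y * M" using a W0nn by (simp add: mult_left_mono)
          ultimately have "g y < (W0f y + W1f y) * M" using grec[of y] by (simp add: algebra_simps)
          then show False using Wsum[of y] gZ[OF that(1)] by simp
        qed
        then show ?thesis using intoZ[OF X1[OF yX]] a by simp
      qed
      have W0pos: "W0f y > 0" if "\<not>(\<exists>k::int. 4 * y = 2 * real_of_int k + 1)" for y
      proof -
        have "cos (2*pi*y) \<noteq> 0"
        proof
          assume "cos (2*pi*y) = 0"
          then obtain i :: int where i: "odd i" "2*pi*y = real_of_int i * (pi/2)" by (auto simp: cos_zero_iff_int)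
          then have "4 * y = real_of_int i" by (simp add: field_simps)
          moreover obtain k where "i = 2*k+1" using i(1) by (rule oddE)
          ultimately show False using that by auto
        qed
        then show ?thesis unfolding W0f_def using Wfun_tau[OF lam0, of 0 y] by simp
      qed
      have W1pos: "W1f y > 0" if "\<not>(\<exists>k::int. 4 * y = 2 * real_of_int k)" for y
      proof -
        have "sin (2*pi*y) \<noteq> 0"
        proof
          assume "sin (2*pi*y) = 0"
          then obtain i :: int where i: "2*pi*y = real_of_int i * pi" by (auto simp: sin_zero_iff_int2)
          then have "4 * y = 2 * real_of_int i" by (simp add: field_simps)
          then show False using that by auto
        qed
        moreover have "cos (2 * pi * (y + 1/4)) = - sin (2 * pi * y)"
          by (simp add: distrib_left cos_add)
        ultimately show ?thesis unfolding W1f_def using Wfun_tau[OF lam0, of "1/4" y] by simp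
      qed
      define Zu where "Zu = (\<lambda>y. 4 * y) ` Z"
      have "0 \<in> Zu"
      proof (rule comb[OF l hyp])
        show "compact Zu" unfolding Zu_def by (intro compact_continuous_image Zc continuous_intros)
        show "Zu \<noteq> {}" unfolding Zu_def using Zne by simp
        show "\<And>u. u \<in> Zu \<Longrightarrow> 0 \<le> u" unfolding Zu_def using ZX Xpos by auto
        show "lam * u \<in> Zu" if uZ: "u \<in> Zu" and nk: "\<not>(\<exists>k::int. u = 2 * real_of_int k + 1)" for u
        proof -
          obtain y where y: "y \<in> Z" "u = 4 * y" using uZ unfolding Zu_def by blast
          have "tau lam 0 y \<in> Z" using child0[OF y(1) W0pos] nk y(2) by auto
          moreover have "lam * u = 4 * tau lam 0 y" using y(2) by (simp add: tau_def)
          ultimately show ?thesis unfolding Zu_def by auto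
        qed
        show "lam * (u + 1) \<in> Zu" if uZ: "u \<in> Zu" and nk: "\<not>(\<exists>k::int. u = 2 * real_of_int k)" for u
        proof -
          obtain y where y: "y \<in> Z" "u = 4 * y" using uZ unfolding Zu_def by blast
          have "tau lam (1/4) y \<in> Z" using child1[OF y(1) W1pos] nk y(2) by auto
          moreover have "lam * (u + 1) = 4 * tau lam (1/4) y" using y(2) by (simp add: tau_def algebra_simps)
          ultimately show ?thesis unfolding Zu_def by auto
        qed
      qed
      then have "0 \<in> Z" unfolding Zu_def by auto
      then have "S 0 0 \<le> 1 - M" unfolding Z_def by auto
      then show ?thesis using S0[of 0] f0 Mpos by simp
    qed
  qed
  \<comment> \<open>Dini\<close>
  show ?thesis
    unfolding uniform_limit_sequentially_iff
  proof (intro allI impI)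
    fix e :: real assume e: "e > 0"
    define U where "U n = {x. 1 - e < S n x}" for n
    have Uo: "open (U n)" for n unfolding U_def by (intro open_Collect_less continuous_on_const Scont)
    have cov: "X \<subseteq> (\<Union>n\<in>UNIV. U n)"
    proof
      fix x assume x: "x \<in> X"
      have "(\<lambda>n. S n x) \<longlonglongrightarrow> 1" using Slim[of x] h1[OF x] by simp
      then have "eventually (\<lambda>n. 1 - e < S n x) sequentially"
        by (rule order_tendstoD) (use e in simp)
      then obtain n where "1 - e < S n x" by (auto simp: eventually_sequentially)
      then show "x \<in> (\<Union>n\<in>UNIV. U n)" unfolding U_def by auto
    qed
    obtain C where C: "C \<subseteq> UNIV" "finite C" "X \<subseteq> (\<Union>c\<in>C. U c)"
      using compactE_image[OF Xc Uo cov] by blast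
    define N where "N = Max (insert 0 C)"
    have "dist (S n x) 1 < e" if nN: "n \<ge> N" and xX: "x \<in> X" for n x
    proof -
      obtain c where c: "c \<in> C" "x \<in> U c" using C(3) xX by blast
      have "c \<le> N" unfolding N_def using C(2) c(1) by simp
      then have "S c x \<le> S n x" using nN Smono_le by simp
      then have "1 - e < S n x" using c(2) unfolding U_def by simp
      moreover have "S n x \<le> 1" using Sbd by simp
      ultimately show ?thesis by (simp add: dist_real_def abs_if)
    qed
    then show "\<exists>N. \<forall>n\<ge>N. \<forall>x\<in>X. dist (S n x) ((\<lambda>x. 1) x) < e" by auto
  qed
qed


lemma nu_hat_char: "nu_hat lam t = char (nu lam) (2 * pi * t)"
  unfolding nu_hat_def char_def cis_conv_exp by (simp add: mult_ac)

theorem proposition4p11: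
  fixes lam :: real
  assumes "0 < lam" and "lam < 1"
    and "\<forall>n::nat. n \<ge> 1 \<longrightarrow> lam \<noteq> 1 - 1 / (2 * real n)"
  shows "uniform_limit (XL lam) (\<lambda>n x. S_partial lam n x) (\<lambda>x. 1) sequentially"
proof -
  have P: "Pm lam (nu lam)" by (rule nu_Pm[OF assms(1,2)])
  interpret real_distribution "nu lam" by (rule Pm_rd[OF P])
  define f where "f t = (cmod (nu_hat lam t))\<^sup>2" for t
  have fc: "continuous_on UNIV f"
    unfolding f_def nu_hat_char continuous_on_eq_continuous_at[OF open_UNIV]
    by (intro ballI continuous_intros isCont_o2[OF _ isCont_char])
  have f0: "f 0 = 1" unfolding f_def nu_hat_char using char_zero by simp
  have fnn: "\<And>t. 0 \<le> f t" unfolding f_def by simp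
  have fle: "\<And>t. f t \<le> 1" unfolding f_def nu_hat_char
    using cmod_char_le_1 by (simp add: power_le_one)
  have feq: "\<And>t. f t = (cos (2*pi*t))\<^sup>2 * f (lam * t)"
  proof -
    fix t
    have "nu_hat lam t = complex_of_real (cos (2*pi*t)) * nu_hat lam (lam * t)"
      unfolding nu_hat_char using Pm_char[OF P, of "2*pi*t"] by (simp add: mult_ac)
    then show "f t = (cos (2*pi*t))\<^sup>2 * f (lam * t)"
      unfolding f_def by (simp add: norm_mult power_mult_distrib)
  qed
  note XP = XL_props[OF assms(1,2)]
  have Xpos: "\<And>x. x \<in> XL lam \<Longrightarrow> 0 \<le> x" using XP(2) by auto
  have Sdef: "\<And>n x. S_partial lam n x = (\<Sum>w\<in>Lw n. W_word lam w x * f (tau_word lam w x))"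
    unfolding S_partial_def Lw_def f_def ..
  show ?thesis
    using main_abstract[OF assms fc f0 fnn fle feq XP(1) Xpos XP(3) XP(4) Sdef] .
qed

end
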